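(* Let $h:\mathbb{R}\to\mathbb{R}$ satisfy $(h(x)-ax)(h(x)-bx)\le0$ for all $x\in\mathbb{R}$, where $b>a>0$, and let $N:\mathcal{L}_{2e+}^1\to\mathcal{L}_{2e+}^1$ be the static system $(Nu)(t)=h(u(t))$. Then $$\theta(N)\le\arccos\frac{2\sqrt{ab}}{a+b}.$$
   Context: $\mathcal{L}_2^1$ is the set of measurable $u:\mathbb{R}\to\mathbb{R}$ with $\|u\|_2^2=\int|u(t)|^2dt<\infty$, inner product $\langle u,v\rangle=\int u(t)v(t)\,dt$; $\mathcal{L}_{2+}=\{u\in\mathcal{L}_2:u(t)=0\ \text{for}\ t<0\}$; for $T\ge0$, $(\Gamma_Tu)(t)=u(t)$ for $t\le T$, $0$ for $t>T$; $\mathcal{L}_{2e+}=\{u:\Gamma_Tu\in\mathcal{L}_{2+}\ \forall T\ge0\}$. For a causal stable system $P$ (i.e. $\Gamma_TP=\Gamma_TP\Gamma_T$, $P$ maps $\mathcal{L}_{2+}$ to $\mathcal{L}_{2+}$ with finite gain $\sup_{0\ne u\in\mathcal{L}_{2+}}\|Pu\|_2/\|u\|_2$), the singular angle $\theta(P)\in[0,\pi]$ is given by $\cos\theta(P)=\inf\{\langle u,Pu\rangle/(\|u\|_2\|Pu\|_2):0\neq u\in\mathcal{L}_{2+},\ Pu\ne0\}$. *)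

theory Defs
  imports "HOL-Analysis.Analysis"
begin

definition L2 :: "(real \<Rightarrow> real) set" where
  "L2 = {u. u \<in> borel_measurable lebesgue \<and> integrable lebesgue (\<lambda>t. (u t)\<^sup>2)}"

definition l2_inner :: "(real \<Rightarrow> real) \<Rightarrow> (real \<Rightarrow> real) \<Rightarrow> real" where
  "l2_inner u v = integral\<^sup>L lebesgue (\<lambda>t. u t * v t)"

definition l2_norm :: "(real \<Rightarrow> real) \<Rightarrow> real" where
  "l2_norm u = sqrt (integral\<^sup>L lebesgue (\<lambda>t. (u t)\<^sup>2))"

definition L2plus :: "(real \<Rightarrow> real) set" where
  "L2plus = {u. u \<in> L2 \<and> (\<forall>t<0. u t = 0)}"

definition trunc :: "real \<Rightarrow> (real \<Rightarrow> real) \<Rightarrow> (real \<Rightarrow> real)" where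
  "trunc T u = (\<lambda>t. if t \<le> T then u t else 0)"

definition L2eplus :: "(real \<Rightarrow> real) set" where
  "L2eplus = {u. \<forall>T\<ge>0. trunc T u \<in> L2plus}"

definition singular_angle :: "((real \<Rightarrow> real) \<Rightarrow> (real \<Rightarrow> real)) \<Rightarrow> real" where
  "singular_angle P = arccos (Inf {l2_inner u (P u) / (l2_norm u * l2_norm (P u)) | u.
      u \<in> L2plus \<and> l2_norm u \<noteq> 0 \<and> l2_norm (P u) \<noteq> 0})"

end

theory Submission
  imports Defs
begin

lemma key_ineq:
  fixes a b s x y I :: real
  assumes "0 < a" "a < b" "sq = sqrt (a*b)" "0 < x" "0 < y"
    and "y^2 + a*b*x^2 \<le> (a+b) * I"
  shows "2 * sqrt (a * b) / (a + b) \<le> I / (x * y)"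
proof -
  have s2: "sq^2 = a*b" using assms by simp
  have "2 * sq * x*y \<le> sq^2*x^2 + y^2"
    using sum_squares_ge_zero[of "sq*x - y" 0] by (simp add: power2_eq_square algebra_simps)
  hence "2 * sq * (x*y) \<le> (a+b)*I" using assms s2 by (simp add: algebra_simps)
  thus ?thesis using assms by (simp add: field_simps)
qed

theorem proposition5:
  fixes h :: "real \<Rightarrow> real" and a b :: real
  assumes "0 < a" and "a < b"
    and "\<And>x. (h x - a * x) * (h x - b * x) \<le> 0"
    and "\<And>u. u \<in> L2eplus \<Longrightarrow> (\<lambda>t. h (u t)) \<in> L2eplus"
  shows "singular_angle (\<lambda>u t. h (u t)) \<le> arccos (2 * sqrt (a * b) / (a + b))"
proof -
  define c where "c = 2 * sqrt (a * b) / (a + b)"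
  define S where "S = {l2_inner u ((\<lambda>u t. h (u t)) u) / (l2_norm u * l2_norm ((\<lambda>u t. h (u t)) u)) | u.
      u \<in> L2plus \<and> l2_norm u \<noteq> 0 \<and> l2_norm ((\<lambda>u t. h (u t)) u) \<noteq> 0}"
  have hb: "\<bar>h x\<bar> \<le> b * \<bar>x\<bar>" for x
  proof -
    have "(h x - a * x) * (h x - b * x) \<le> 0" by (rule assms(3))
    hence d: "(h x - a*x \<le> 0 \<and> 0 \<le> h x - b*x) \<or> (0 \<le> h x - a*x \<and> h x - b*x \<le> 0)"
      by (auto simp: mult_le_0_iff)
    show ?thesis
    proof (cases "x \<ge> 0")
      case True
      have "a*x \<le> b*x" using assms(2) True by (simp add: mult_right_mono)
      moreover have "0 \<le> a*x" using assms(1) True by simp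
      ultimately show ?thesis using d True by (auto simp: abs_if)
    next
      case False
      have "b*x \<le> a*x" using assms(2) False by simp
      moreover have "a*x \<le> 0" using assms(1) False by (simp add: mult_nonneg_nonpos)
      ultimately have "b*x \<le> h x" "h x \<le> 0" using d by linarith+
      moreover have "\<bar>x\<bar> = - x" using False by simp
      ultimately show ?thesis by simp
    qed
  qed
  have hp: "(h x)^2 + a*b*x^2 \<le> (a+b) * (x * h x)" for x
    using assms(3)[of x] by (simp add: power2_eq_square algebra_simps)
  have h0: "h 0 = 0" using hb[of 0] by simp
  have lowS: "c \<le> s" if "s \<in> S" for s
  proof -
    obtain u where s: "s = l2_inner u (\<lambda>t. h (u t)) / (l2_norm u * l2_norm (\<lambda>t. h (u t)))"
      and u: "u \<in> L2plus" "l2_norm u \<noteq> 0" "l2_norm (\<lambda>t. h (u t)) \<noteq> 0"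
      using \<open>s \<in> S\<close> unfolding S_def by auto
    have um: "u \<in> borel_measurable lebesgue" and ui: "integrable lebesgue (\<lambda>t. (u t)\<^sup>2)"
      using u(1) by (auto simp: L2plus_def L2_def)
    have "u \<in> L2eplus"
    proof -
      have "trunc T u \<in> L2plus" for T
      proof -
        have te: "trunc T u = (\<lambda>t. indicator {..T} t * u t)"
          by (auto simp: trunc_def indicator_def fun_eq_iff)
        have "{..T} \<in> sets lebesgue" by (intro sets_completionI_sets) simp
        hence "(indicator {..T} :: real \<Rightarrow> real) \<in> borel_measurable lebesgue" by (rule borel_measurable_indicator)
        hence m: "trunc T u \<in> borel_measurable lebesgue"
          unfolding te using um by (intro borel_measurable_times)
        have "integrable lebesgue (\<lambda>t. (trunc T u t)\<^sup>2)"
          by (rule Bochner_Integration.integrable_bound[OF ui]) (use m in \<open>auto simp: trunc_def\<close>)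
        thus ?thesis using m u(1) by (auto simp: L2plus_def L2_def trunc_def)
      qed
      thus ?thesis by (auto simp: L2eplus_def)
    qed
    hence Ne: "(\<lambda>t. h (u t)) \<in> L2eplus" by (rule assms(4))
    have Nm: "(\<lambda>t. h (u t)) \<in> borel_measurable lebesgue"
    proof (rule borel_measurable_LIMSEQ_real)
      fix i :: nat
      show "trunc (real i) (\<lambda>t. h (u t)) \<in> borel_measurable lebesgue"
        using Ne by (auto simp: L2eplus_def L2plus_def L2_def)
    next
      fix t
      show "(\<lambda>i. trunc (real i) (\<lambda>t. h (u t)) t) \<longlonglongrightarrow> h (u t)"
      proof (rule tendsto_eventually)
        obtain n :: nat where "t \<le> real n" using real_arch_simple by blast
        hence "\<forall>i\<ge>n. trunc (real i) (\<lambda>t. h (u t)) t = h (u t)"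
          by (auto simp: trunc_def)
        thus "\<forall>\<^sub>F i in sequentially. trunc (real i) (\<lambda>t. h (u t)) t = h (u t)"
          using eventually_sequentially by blast
      qed
    qed
    have Ni: "integrable lebesgue (\<lambda>t. (h (u t))\<^sup>2)"
    proof (rule Bochner_Integration.integrable_bound[OF integrable_mult_right[OF ui, of "b^2"]])
      show "(\<lambda>t. (h (u t))\<^sup>2) \<in> borel_measurable lebesgue" using Nm by measurable
      show "AE x in lebesgue. norm ((h (u x))\<^sup>2) \<le> norm (b\<^sup>2 * (u x)\<^sup>2)"
      proof
        fix x
        have "\<bar>h (u x)\<bar>^2 \<le> (b * \<bar>u x\<bar>)^2"
          by (rule power_mono[OF hb]) simp
        thus "norm ((h (u x))\<^sup>2) \<le> norm (b\<^sup>2 * (u x)\<^sup>2)"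
          by (simp add: power_mult_distrib)
      qed
    qed
    have Pi: "integrable lebesgue (\<lambda>t. u t * h (u t))"
    proof (rule Bochner_Integration.integrable_bound[OF integrable_mult_right[OF ui, of "b"]])
      show "(\<lambda>t. u t * h (u t)) \<in> borel_measurable lebesgue" using Nm um by measurable
      show "AE x in lebesgue. norm (u x * h (u x)) \<le> norm (b * (u x)\<^sup>2)"
      proof
        fix x
        have "\<bar>u x\<bar> * \<bar>h (u x)\<bar> \<le> \<bar>u x\<bar> * (b * \<bar>u x\<bar>)"
          by (rule mult_left_mono[OF hb]) simp
        thus "norm (u x * h (u x)) \<le> norm (b * (u x)\<^sup>2)"
          using assms(1,2) by (simp add: abs_mult power2_eq_square abs_mult_self_eq algebra_simps)
      qed
    qed
    define U where "U = integral\<^sup>L lebesgue (\<lambda>t. (u t)\<^sup>2)"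
    define V where "V = integral\<^sup>L lebesgue (\<lambda>t. (h (u t))\<^sup>2)"
    define I where "I = integral\<^sup>L lebesgue (\<lambda>t. u t * h (u t))"
    have U0: "U \<ge> 0" unfolding U_def by simp
    have V0: "V \<ge> 0" unfolding V_def by simp
    have "V + a*b*U = integral\<^sup>L lebesgue (\<lambda>t. (h (u t))\<^sup>2 + a*b*(u t)\<^sup>2)"
      unfolding U_def V_def using Ni ui by simp
    also have "\<dots> \<le> integral\<^sup>L lebesgue (\<lambda>t. (a+b) * (u t * h (u t)))"
      by (rule integral_mono) (use Ni ui Pi hp in auto)
    also have "\<dots> = (a+b) * I" unfolding I_def by simp
    finally have ineq: "(sqrt V)^2 + a*b*(sqrt U)^2 \<le> (a+b)*I" using U0 V0 by simp
    have xs: "0 < sqrt U" "0 < sqrt V"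
    proof -
      have "l2_norm u = sqrt U" "l2_norm (\<lambda>t. h (u t)) = sqrt V"
        by (simp_all add: l2_norm_def U_def V_def)
      thus "0 < sqrt U" "0 < sqrt V" using u(2,3) U0 V0 by auto
    qed
    have "c \<le> I / (sqrt U * sqrt V)"
      unfolding c_def by (rule key_ineq[OF assms(1,2) refl xs ineq])
    thus ?thesis unfolding s l2_inner_def l2_norm_def U_def V_def I_def .
  qed
  define e :: "real \<Rightarrow> real" where "e = indicator {0..1}"
  have h1: "a \<le> h 1" "h 1 \<le> b" using assms(1,2) assms(3)[of 1]
    by (auto simp: mult_le_0_iff)
  have eint: "integrable lebesgue (\<lambda>t. (e t)\<^sup>2)"
  proof -
    have "(\<lambda>t. (e t)\<^sup>2) = indicator {0..1::real}" by (auto simp: e_def indicator_def)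
    thus ?thesis by simp
  qed
  have eI: "integral\<^sup>L lebesgue (\<lambda>t. (e t)\<^sup>2) = 1"
  proof -
    have "(\<lambda>t. (e t)\<^sup>2) = indicator {0..1::real}" by (auto simp: e_def indicator_def)
    thus ?thesis by simp
  qed
  have he: "(\<lambda>t. h (e t)) = (\<lambda>t. h 1 * e t)" using h0 by (auto simp: e_def indicator_def)
  have "{0..1::real} \<in> sets lebesgue" by (intro sets_completionI_sets) simp
  hence "(indicator {0..1} :: real \<Rightarrow> real) \<in> borel_measurable lebesgue" by (rule borel_measurable_indicator)
  hence eL: "e \<in> L2plus" using eint by (auto simp: L2plus_def L2_def e_def)
  have n1: "l2_norm e = 1" using eI by (simp add: l2_norm_def)
  have n2: "l2_norm (\<lambda>t. h (e t)) = h 1" using eI h1 assms(1)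
    by (simp add: l2_norm_def he power_mult_distrib)
  have i1: "l2_inner e (\<lambda>t. h (e t)) = h 1" using eI
  proof -
    have "(\<lambda>t. e t * (h 1 * e t)) = (\<lambda>t. h 1 * (e t)\<^sup>2)" by (auto simp: power2_eq_square)
    thus ?thesis using eI by (simp add: l2_inner_def he)
  qed
  have oneS: "1 \<in> S" unfolding S_def
    apply (rule CollectI, rule exI[of _ e]) using eL n1 n2 i1 h1 assms(1) by auto
  have bdd: "bdd_below S" using lowS by (auto simp: bdd_below_def)
  have "c \<le> Inf S" by (rule cInf_greatest) (use oneS lowS in auto)
  moreover have "Inf S \<le> 1" by (rule cInf_lower[OF oneS bdd])
  moreover have "-1 \<le> c"
  proof -
    have "0 \<le> 2 * sqrt (a * b) / (a + b)" using assms(1,2) by simp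
    thus ?thesis unfolding c_def by linarith
  qed
  ultimately have "arccos (Inf S) \<le> arccos c" by (intro arccos_le_arccos) auto
  thus ?thesis unfolding singular_angle_def S_def c_def by simp
qed

end
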